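(* For all integers $n\ge 3$ and $0\le r\le n$, $$N_0^{n,r}=\frac{2}{n-1}\binom{n-1}{r}\binom{n-1}{n-r}\quad\text{and}\quad N_1^{n,r}=2N_0^{n,r}.$$
   Context: A lattice path from $(0,0)$ to $(r,n-r)$ (with integers $n\ge 1$, $0\le r\le n$) is a sequence of lattice points $v_0=(0,0),v_1,\dots,v_n=(r,n-r)$ with each step $v_i-v_{i-1}\in\{(1,0),(0,1)\}$ (an E step or an N step); its vertex set is $\{v_0,\dots,v_n\}$. For $k\ge 0$, $N_k^{n,r}$ denotes the number of ordered pairs $(P,Q)$ of lattice paths from $(0,0)$ to $(r,n-r)$ such that the intersection of their vertex sets, with the two points $(0,0)$ and $(r,n-r)$ removed, has exactly $k$ elements. Binomial coefficients $\binom{a}{b}$ with $a\ge 0$ are $0$ if $b<0$ or $b>a$. *)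

theory Defs
  imports Complex_Main
begin

definition lattice_path :: "nat \<Rightarrow> nat \<Rightarrow> (nat \<times> nat) list \<Rightarrow> bool" where
  "lattice_path n r P \<longleftrightarrow>
     length P = Suc n \<and> P ! 0 = (0, 0) \<and> P ! n = (r, n - r) \<and>
     (\<forall>i. 1 \<le> i \<and> i \<le> n \<longrightarrow>
        P ! i = (fst (P ! (i - 1)) + 1, snd (P ! (i - 1))) \<or>
        P ! i = (fst (P ! (i - 1)), snd (P ! (i - 1)) + 1))"

definition Npairs :: "nat \<Rightarrow> nat \<Rightarrow> nat \<Rightarrow> nat" where
  "Npairs k n r = card {(P, Q). lattice_path n r P \<and> lattice_path n r Q \<and>
       card ((set P \<inter> set Q) - {(0, 0), (r, n - r)}) = k}"

end

theory Submission
  imports Defs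
begin


fun Yf :: "nat \<Rightarrow> int \<Rightarrow> int \<Rightarrow> nat \<Rightarrow> nat" where
  "Yf 0 a b k = (if a = 0 \<and> b = 0 \<and> k = 0 then 1 else 0)"
| "Yf (Suc m) a b k = (if a = b \<and> k = 0 then 0 else
     (let k' = (if a = b then k - 1 else k) in
       Yf m (a-1) (b-1) k' + Yf m (a-1) b k' + Yf m a (b-1) k' + Yf m a b k'))"

definition B :: "nat \<Rightarrow> int \<Rightarrow> int" where
  "B p j = (if j < 0 then 0 else int (p choose nat j))"

lemma B_Suc: "B (Suc p) j = B p j + B p (j - 1)"
proof -
  consider "j < 0" | "j = 0" | "j > 0" by linarith
  then show ?thesis
  proof cases
    case 3
    then have "nat j = Suc (nat (j - 1))" by simp
    then show ?thesis using 3 by (simp add: B_def)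
  qed (auto simp: B_def)
qed

definition F0 :: "nat \<Rightarrow> int \<Rightarrow> int \<Rightarrow> int" where
  "F0 p a b = B p (a-2)*B p (b-1)+B p (a-2)*B p b-B p (a-1)*B p (b-2)+B p (a-1)*B p b-B p a*B p (b-2)-B p a*B p (b-1)"
definition F1 :: "nat \<Rightarrow> int \<Rightarrow> int \<Rightarrow> int" where
  "F1 p a b = B p (a-2)*B p (b-1)-B p (a-1)*B p (b-2)+2*B p (a-1)*B p (b-1)+B p (a-1)*B p b-2*B p a*B p (b-2)-B p a*B p (b-1)"

lemma F0_rec: "F0 (Suc p) a b = F0 p (a-1) (b-1) + F0 p (a-1) b + F0 p a (b-1) + F0 p a b"
  unfolding F0_def B_Suc by (simp add: diff_diff_eq algebra_simps)

lemma F1_rec: "F1 (Suc p) a b = F1 p (a-1) (b-1) + F1 p (a-1) b + F1 p a (b-1) + F1 p a b"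
  unfolding F1_def B_Suc by (simp add: diff_diff_eq algebra_simps)

lemma F0_diag: "F0 p a a = 0" unfolding F0_def by (simp add: algebra_simps)

lemma F1_diag: "F1 (Suc p) a a = 2 * F0 p a (a-1)"
  unfolding F1_def F0_def B_Suc by (simp add: diff_diff_eq algebra_simps)

lemma N1_id: "F1 q (r-1) (r-1) + 2 * F1 q r (r-1) + F1 q r r = 2 * F1 (Suc q) r r"
  unfolding F1_def B_Suc by (simp add: diff_diff_eq algebra_simps)

lemma Yf_sym: "Yf m a b k = Yf m b a k"
  by (induction m arbitrary: a b k) (auto simp: Let_def)

lemma Yf_zero: "a < 0 \<or> b < 0 \<or> a > int m \<or> b > int m \<Longrightarrow> Yf m a b k = 0"
  by (induction m arbitrary: a b k) (auto simp: Let_def)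


lemma Yf_neq: "a \<noteq> b \<Longrightarrow> Yf (Suc m) a b k = Yf m (a-1) (b-1) k + Yf m (a-1) b k + Yf m a (b-1) k + Yf m a b k"
  by (simp add: Let_def)
lemma Yf_eq0: "Yf (Suc m) a a 0 = 0" by simp
lemma Yf_eqS: "Yf (Suc m) a a (Suc k) = Yf m (a-1) (a-1) k + Yf m (a-1) a k + Yf m a (a-1) k + Yf m a a k"
  by (simp add: Let_def)

lemma B0: "B 0 j = (if j = 0 then 1 else 0)"
  by (auto simp: B_def)

lemma Yf_base: "b \<le> a \<Longrightarrow> int (Yf 2 a b 0) = F0 0 a b \<and> int (Yf 2 a b 1) = F1 0 a b"
proof (cases "a > 2 \<or> b < 0")
  case True
  then have "Yf 2 a b 0 = 0" "Yf 2 a b 1 = 0" using Yf_zero[of a b 2] by auto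
  moreover have "F0 0 a b = 0" "F1 0 a b = 0" using True
    by (auto simp: F0_def F1_def B0)
  ultimately show ?thesis by simp
next
  case False
  assume "b \<le> a"
  with False have "(a = 0 \<and> b = 0) \<or> (a = 1 \<and> b = 0) \<or> (a = 1 \<and> b = 1) \<or> (a = 2 \<and> b = 0) \<or> (a = 2 \<and> b = 1) \<or> (a = 2 \<and> b = 2)"
    by linarith
  then show ?thesis
    by (elim disjE) (simp_all add: numeral_2_eq_2 F0_def F1_def B_def Let_def)
qed

lemma Yf_closed: "b \<le> a \<Longrightarrow> int (Yf (Suc (Suc p)) a b 0) = F0 p a b \<and> int (Yf (Suc (Suc p)) a b 1) = F1 p a b"
proof (induction p arbitrary: a b)
  case 0
  then show ?case using Yf_base by (simp add: numeral_2_eq_2)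
next
  case (Suc p)
  show ?case
  proof (cases "a = b")
    case True
    have h1: "int (Yf (Suc (Suc p)) a (a-1) 0) = F0 p a (a-1)" using Suc.IH[of "a-1" a] by simp
    have h2: "int (Yf (Suc (Suc p)) (a-1) a 0) = F0 p a (a-1)" using h1 Yf_sym by metis
    have h3: "int (Yf (Suc (Suc p)) (a-1) (a-1) 0) = 0" using Suc.IH[of "a-1" "a-1"] F0_diag by simp
    have h4: "int (Yf (Suc (Suc p)) a a 0) = 0" using Suc.IH[of a a] F0_diag by simp
    have "int (Yf (Suc (Suc (Suc p))) a a 1) = F1 (Suc p) a a"
      using h1 h2 h3 h4 F1_diag[of p a] Yf_eqS[of "Suc (Suc p)" a 0] by simp
    then show ?thesis using True F0_diag Yf_eq0 by (simp del: Yf.simps)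
  next
    case False
    with Suc.prems have ab: "b < a" by simp
    have i1: "int (Yf (Suc (Suc p)) (a-1) (b-1) k) = (if k = 0 then F0 p (a-1) (b-1) else F1 p (a-1) (b-1))"
      and i2: "int (Yf (Suc (Suc p)) (a-1) b k) = (if k = 0 then F0 p (a-1) b else F1 p (a-1) b)"
      and i3: "int (Yf (Suc (Suc p)) a (b-1) k) = (if k = 0 then F0 p a (b-1) else F1 p a (b-1))"
      and i4: "int (Yf (Suc (Suc p)) a b k) = (if k = 0 then F0 p a b else F1 p a b)"
      if "k = 0 \<or> k = 1" for k
      using Suc.IH[of "b-1" "a-1"] Suc.IH[of b "a-1"] Suc.IH[of "b-1" a] Suc.IH[of b a] ab that by auto
    show ?thesis
      using i1[of 0] i2[of 0] i3[of 0] i4[of 0] i1[of 1] i2[of 1] i3[of 1] i4[of 1] ab F0_rec[of p a b] F1_rec[of p a b]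
      Yf_neq[of a b "Suc (Suc p)" 0] Yf_neq[of a b "Suc (Suc p)" 1]
      by (simp del: Yf.simps)
  qed
qed


lemma F1_diag': "F1 p a a = 2 * B p (a-1)^2 - 2 * B p a * B p (a-2)"
  unfolding F1_def by (simp add: power2_eq_square algebra_simps)

lemma narayana:
  fixes p r :: nat
  assumes "r \<le> p + 2"
  shows "real_of_int (F1 p (int r) (int r)) = 2 / real (p+1) * real (Suc p choose r) * real (Suc p choose (p + 2 - r))"
proof -
  consider "r = 0" | "r = p + 2" | s where "r = Suc s" "s \<le> p"
  proof (cases r)
    case (Suc s)
    then show ?thesis using assms that by (cases "s \<le> p") auto
  qed simp
  then show ?thesis
  proof cases
    case 1
    then show ?thesis by (simp add: F1_diag' B_def binomial_eq_0)
  next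
    case 2
    have "B p (int p + 1) = 0" "B p (int p + 2) = 0" by (auto simp: B_def nat_add_distrib)
    then show ?thesis using 2 by (simp add: F1_diag' algebra_simps binomial_eq_0)
  next
    case 3
    define c where "c = real (p choose s)"
    define D where "D = real (Suc p choose Suc s)"
    define E where "E = real (Suc p choose s)"
    have hD: "D * (real s + 1) = (real p + 1) * c"
    proof -
      have "real (Suc p * (p choose s)) = real ((Suc p choose Suc s) * Suc s)"
        using Suc_times_binomial_eq[of p s] by (simp only:)
      then show ?thesis unfolding D_def c_def by (simp add: algebra_simps)
    qed
    have hE: "E * (real p + 1 - real s) = (real p + 1) * c"
    proof -
      have "(Suc p - s) * (Suc p choose s) = Suc p * (p choose s)"
        using binomial_absorb_comp[of "Suc p" s] by simp
      then have "real ((Suc p - s) * (Suc p choose s)) = real (Suc p * (p choose s))" by (simp only:)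
      then have "real (Suc p - s) * E = real (Suc p) * c" unfolding E_def c_def of_nat_mult .
      then have "real (Suc p - s) * E = (real p + 1) * c" by simp
      then show ?thesis using 3 by (simp add: of_nat_diff algebra_simps)
    qed
    have hX: "real_of_int (B p (int r)) = D - c"
    proof -
      have e: "nat (1 + int s) = Suc s" by simp
      have "B p (int r) = int (p choose Suc s)" using 3 by (simp add: B_def e)
      then show ?thesis by (simp add: D_def c_def)
    qed
    have hc: "real_of_int (B p (int r - 1)) = c" using 3 by (simp add: B_def c_def)
    have hY: "real_of_int (B p (int r - 2)) = E - c"
    proof (cases s)
      case 0
      then show ?thesis using 3 by (simp add: B_def E_def c_def)
    next
      case (Suc t)
      then have "int r - 2 = int t" using 3 by simp
      then show ?thesis using Suc by (simp add: B_def E_def c_def)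
    qed
    have sym: "Suc p choose (p + 2 - r) = Suc p choose s"
      using 3 binomial_symmetric[of s "Suc p"] by simp
    have pos1: "real s + 1 > 0" and pos2: "real p + 1 - real s > 0" using 3 by auto
    have key: "2 * c ^ 2 - 2 * (D - c) * (E - c) = 2 / (real p + 1) * D * E"
    proof -
      define a where "a = real s + 1"
      define b where "b = real p + 1 - real s"
      define q where "q = real p + 1"
      have q: "q = a + b - 1" unfolding a_def b_def q_def by simp
      have hD': "D * a = q * c" using hD unfolding a_def q_def .
      have hE': "E * b = q * c" using hE unfolding b_def q_def .
      have "a * b * (q * (c * D + c * E - D * E)) = q * (c * (D * a) * b + c * (E * b) * a - (D * a) * (E * b))"
        by (simp add: algebra_simps)
      also have "... = q * (c * (q * c) * b + c * (q * c) * a - (q * c) * (q * c))"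
        unfolding hD' hE' ..
      also have "... = q * q * c * c * (a + b - q)" by (simp add: algebra_simps)
      also have "... = q * q * c * c" unfolding q by simp
      also have "... = a * b * (D * E)"
        using hD' hE' by (metis mult.commute mult.left_commute)
      finally have "a * b * (q * (c * D + c * E - D * E)) = a * b * (D * E)" .
      moreover have "a * b \<noteq> 0" using pos1 pos2 unfolding a_def b_def by simp
      ultimately have e: "q * (c * D + c * E - D * E) = D * E" by simp
      have qp: "q > 0" unfolding q_def by simp
      have "2 * c ^ 2 - 2 * (D - c) * (E - c) = 2 * (c * D + c * E - D * E)"
        by (simp add: algebra_simps power2_eq_square)
      also have "... = 2 / q * (q * (c * D + c * E - D * E))" using qp by simp
      also have "... = 2 / q * (D * E)" unfolding e ..
      finally show ?thesis unfolding q_def by simp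
    qed
    have L: "real_of_int (F1 p (int r) (int r)) = 2 * c ^ 2 - 2 * (D - c) * (E - c)"
    proof -
      have "int r - 1 = int s" "int r - 2 = int s - 1" using 3 by auto
      then show ?thesis unfolding F1_diag' using hX hc hY by simp
    qed
    have R: "2 / real (p+1) * real (Suc p choose r) * real (Suc p choose (p + 2 - r)) = 2 / (real p + 1) * D * E"
    proof -
      have "Suc p choose (Suc p - s) = Suc p choose s"
        using 3 binomial_symmetric[of s "Suc p"] by simp
      then show ?thesis unfolding D_def E_def 3 by (simp add: add.commute)
    qed
    show ?thesis unfolding L R key ..
  qed
qed



definition cT :: "bool list \<Rightarrow> nat" where "cT w = length (filter id w)"
definition pth :: "bool list \<Rightarrow> (nat \<times> nat) list" where
  "pth w = map (\<lambda>i. (cT (take i w), i - cT (take i w))) [0..<Suc (length w)]"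

lemma cT_le: "cT (take i w) \<le> i"
  unfolding cT_def by (metis length_filter_le length_take min.bounded_iff order_trans le_refl)

lemma cT_take_Suc: "i < length w \<Longrightarrow> cT (take (Suc i) w) = cT (take i w) + (if w ! i then 1 else 0)"
  unfolding cT_def by (simp add: take_Suc_conv_app_nth)

lemma cT_snoc: "cT (u @ [x]) = cT u + (if x then 1 else 0)"
  unfolding cT_def by simp

lemma pth_nth: "i \<le> length w \<Longrightarrow> pth w ! i = (cT (take i w), i - cT (take i w))"
  unfolding pth_def by (simp del: upt_Suc add: nth_map_upt)

lemma length_pth[simp]: "length (pth w) = Suc (length w)"
  unfolding pth_def by simp

lemma lp_if: "length w = n \<Longrightarrow> cT w = r \<Longrightarrow> lattice_path n r (pth w)"
  unfolding lattice_path_def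
proof (intro conjI allI impI)
  assume w: "length w = n" "cT w = r"
  show "length (pth w) = Suc n" using w by simp
  show "pth w ! 0 = (0, 0)" by (simp add: pth_nth cT_def)
  show "pth w ! n = (r, n - r)" using w by (simp add: pth_nth)
  fix i assume i: "1 \<le> i \<and> i \<le> n"
  then obtain j where j: "i = Suc j" "j < length w" using w by (cases i) auto
  have c: "cT (take j w) \<le> j" by (rule cT_le)
  show "pth w ! i = (fst (pth w ! (i - 1)) + 1, snd (pth w ! (i - 1))) \<or>
        pth w ! i = (fst (pth w ! (i - 1)), snd (pth w ! (i - 1)) + 1)"
    using j c by (simp add: pth_nth cT_take_Suc Suc_diff_le)
qed

lemma lp_only_if:
  assumes "lattice_path n r P"
  shows "\<exists>w. length w = n \<and> cT w = r \<and> P = pth w"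
proof -
  define w where "w = map (\<lambda>j. fst (P ! Suc j) \<noteq> fst (P ! j)) [0..<n]"
  have lw: "length w = n" unfolding w_def by simp
  have LP: "length P = Suc n" "P ! 0 = (0, 0)" "P ! n = (r, n - r)"
    and st: "\<And>i. 1 \<le> i \<Longrightarrow> i \<le> n \<Longrightarrow> P ! i = (fst (P ! (i - 1)) + 1, snd (P ! (i - 1))) \<or>
        P ! i = (fst (P ! (i - 1)), snd (P ! (i - 1)) + 1)"
    using assms unfolding lattice_path_def by auto
  have main: "i \<le> n \<Longrightarrow> P ! i = (cT (take i w), i - cT (take i w))" for i
  proof (induction i)
    case 0
    then show ?case using LP by (simp add: cT_def)
  next
    case (Suc j)
    then have IH: "P ! j = (cT (take j w), j - cT (take j w))" by simp
    have c: "cT (take j w) \<le> j" by (rule cT_le)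
    have wj: "w ! j = (fst (P ! Suc j) \<noteq> fst (P ! j))" using Suc.prems unfolding w_def by simp
    have ct: "cT (take (Suc j) w) = cT (take j w) + (if w ! j then 1 else 0)"
      using Suc.prems lw by (simp add: cT_take_Suc)
    have d: "P ! Suc j = (fst (P ! (Suc j - 1)) + 1, snd (P ! (Suc j - 1))) \<or>
        P ! Suc j = (fst (P ! (Suc j - 1)), snd (P ! (Suc j - 1)) + 1)" using st[of "Suc j"] Suc.prems by simp
    from d show ?case
    proof (elim disjE)
      assume "P ! Suc j = (fst (P ! (Suc j - 1)) + 1, snd (P ! (Suc j - 1)))"
      then show ?thesis using IH c wj ct by simp
    next
      assume "P ! Suc j = (fst (P ! (Suc j - 1)), snd (P ! (Suc j - 1)) + 1)"
      then show ?thesis using IH c wj ct by (simp add: Suc_diff_le)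
    qed
  qed
  have "P = pth w"
    by (rule nth_equalityI) (use LP lw main pth_nth in auto)
  moreover have "cT w = r" using main[of n] LP lw by simp
  ultimately show ?thesis using lw by blast
qed

lemma lp_iff: "lattice_path n r P \<longleftrightarrow> (\<exists>w. length w = n \<and> cT w = r \<and> P = pth w)"
  using lp_if lp_only_if by blast

lemma pth_inj: "inj pth"
proof (rule injI)
  fix u v assume e: "pth u = pth v"
  then have l: "length u = length v" using length_pth by (metis nat.inject)
  show "u = v"
  proof (rule nth_equalityI[OF l])
    fix j assume j: "j < length u"
    have "pth u ! j = pth v ! j" "pth u ! Suc j = pth v ! Suc j" using e by auto
    then have "cT (take j u) = cT (take j v)" "cT (take (Suc j) u) = cT (take (Suc j) v)"
      using j l by (auto simp: pth_nth)
    then show "u ! j = v ! j" using j l by (auto simp: cT_take_Suc split: if_splits)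
  qed
qed

lemma set_pth: "set (pth w) = (\<lambda>i. (cT (take i w), i - cT (take i w))) ` {..length w}"
  unfolding pth_def set_map set_upt by (simp add: atLeast0LessThan lessThan_Suc_atMost)

lemma inter_card:
  assumes "length u = n" "length v = n" "cT u = r" "cT v = r"
  shows "card ((set (pth u) \<inter> set (pth v)) - {(0, 0), (r, n - r)}) =
         card {i. 0 < i \<and> i < n \<and> cT (take i u) = cT (take i v)}"
proof -
  define f where "f = (\<lambda>i. (cT (take i u), i - cT (take i u)))"
  have sumf: "fst (f i) + snd (f i) = i" for i unfolding f_def using cT_le[of i u] by simp
  have "(set (pth u) \<inter> set (pth v)) - {(0, 0), (r, n - r)} = f ` {i. 0 < i \<and> i < n \<and> cT (take i u) = cT (take i v)}"
  proof (rule set_eqI, rule iffI)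
    fix z assume z: "z \<in> (set (pth u) \<inter> set (pth v)) - {(0, 0), (r, n - r)}"
    have zu: "z \<in> set (pth u)" and zv: "z \<in> set (pth v)" using z by auto
    obtain i where i: "i \<le> n" "z = (cT (take i u), i - cT (take i u))"
      using zu assms unfolding set_pth by auto
    obtain j where j: "j \<le> n" "z = (cT (take j v), j - cT (take j v))"
      using zv assms unfolding set_pth by auto
    have "i = j" using i j cT_le[of i u] cT_le[of j v]
      by (metis add_diff_inverse_nat fst_conv not_le snd_conv)
    then have eq: "cT (take i u) = cT (take i v)" using i j by simp
    have "i \<noteq> 0"
    proof
      assume "i = 0"
      then have "z = (0, 0)" using i by (simp add: cT_def)
      with z show False by simp
    qed
    moreover have "i \<noteq> n" using z i assms by auto
    ultimately show "z \<in> f ` {i. 0 < i \<and> i < n \<and> cT (take i u) = cT (take i v)}"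
      using i eq unfolding f_def by auto
  next
    fix z assume "z \<in> f ` {i. 0 < i \<and> i < n \<and> cT (take i u) = cT (take i v)}"
    then obtain i where i: "0 < i" "i < n" "cT (take i u) = cT (take i v)" "z = f i" by auto
    have "z \<in> set (pth u)" using i assms unfolding set_pth f_def by (auto intro!: image_eqI[of _ _ i])
    moreover have "z \<in> set (pth v)" using i assms unfolding set_pth f_def by (auto intro!: image_eqI[of _ _ i])
    moreover have "z \<noteq> (0, 0)" using sumf[of i] i by auto
    moreover have "z \<noteq> (r, n - r)" using sumf[of i] i assms cT_le[of n u] by auto
    ultimately show "z \<in> (set (pth u) \<inter> set (pth v)) - {(0, 0), (r, n - r)}" by simp
  qed
  moreover have "inj_on f {i. 0 < i \<and> i < n \<and> cT (take i u) = cT (take i v)}"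
    by (rule inj_onI) (metis sumf)
  ultimately show ?thesis by (simp add: card_image)
qed



definition zc :: "bool list \<Rightarrow> bool list \<Rightarrow> nat" where
  "zc u v = card {i \<in> {1..length u}. cT (take i u) = cT (take i v)}"

definition S :: "nat \<Rightarrow> int \<Rightarrow> int \<Rightarrow> nat \<Rightarrow> (bool list \<times> bool list) set" where
  "S m a b k = {(u, v). length u = m \<and> length v = m \<and> int (cT u) = a \<and> int (cT v) = b \<and> zc u v = k}"

lemma zc_snoc:
  assumes "length u = length v"
  shows "zc (u @ [x]) (v @ [y]) = zc u v + (if cT (u @ [x]) = cT (v @ [y]) then 1 else 0)"
proof -
  let ?m = "length u"
  have "{i \<in> {1..length (u @ [x])}. cT (take i (u @ [x])) = cT (take i (v @ [y]))} =
        {i \<in> {1..?m}. cT (take i u) = cT (take i v)} \<union>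
        (if cT (u @ [x]) = cT (v @ [y]) then {Suc ?m} else {})"
    using assms by (auto simp: le_Suc_eq)
  moreover have "finite {i \<in> {1..?m}. cT (take i u) = cT (take i v)}" by simp
  ultimately show ?thesis unfolding zc_def by (simp add: card_insert_if)
qed

lemma finite_S: "finite (S m a b k)"
proof -
  have f: "finite {u :: bool list. length u = m}"
    using finite_lists_length_eq[of "UNIV :: bool set" m] by simp
  have "S m a b k \<subseteq> {u. length u = m} \<times> {u. length u = m}" unfolding S_def by auto
  then show ?thesis using f by (meson finite_SigmaI finite_subset)
qed

definition g :: "bool \<Rightarrow> bool \<Rightarrow> bool list \<times> bool list \<Rightarrow> bool list \<times> bool list" where
  "g x y = (\<lambda>(u, v). (u @ [x], v @ [y]))"

lemma g_inj: "inj (g x y)"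
  by (rule injI) (auto simp: g_def split: prod.splits)

lemma S_Suc_empty: "S (Suc m) a a 0 = {}"
proof (rule ccontr)
  assume "S (Suc m) a a 0 \<noteq> {}"
  then obtain U V where UV: "(U, V) \<in> S (Suc m) a a 0" by auto
  then have l: "length U = Suc m" "length V = Suc m" unfolding S_def by auto
  obtain u x where U: "U = u @ [x]" using l by (cases U rule: rev_exhaust) auto
  obtain v y where V: "V = v @ [y]" using l by (cases V rule: rev_exhaust) auto
  have "cT U = cT V" using UV unfolding S_def by auto
  then have "zc U V \<ge> 1" using zc_snoc[of u v x y] l U V by simp
  then show False using UV unfolding S_def by simp
qed

lemma S_Suc:
  assumes "\<not> (a = b \<and> k = 0)"
  defines "k' \<equiv> (if a = b then k - 1 else k)"
  shows "S (Suc m) a b k = g True True ` S m (a-1) (b-1) k' \<union> g True False ` S m (a-1) b k' \<union>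
                           g False True ` S m a (b-1) k' \<union> g False False ` S m a b k'"
proof (rule set_eqI, rule iffI)
  fix z assume z: "z \<in> S (Suc m) a b k"
  obtain U V where zUV: "z = (U, V)" by (cases z)
  then have l: "length U = Suc m" "length V = Suc m" using z unfolding S_def by auto
  obtain u x where U: "U = u @ [x]" using l by (cases U rule: rev_exhaust) auto
  obtain v y where V: "V = v @ [y]" using l by (cases V rule: rev_exhaust) auto
  have lu: "length u = m" "length v = m" using l U V by auto
  have c: "int (cT U) = a" "int (cT V) = b" "zc U V = k" using z zUV unfolding S_def by auto
  have zc': "zc u v = k'" using zc_snoc[of u v x y] c lu U V assms(1) unfolding k'_def by auto
  have cu: "int (cT u) = a - (if x then 1 else 0)" "int (cT v) = b - (if y then 1 else 0)"
    using c U V by (auto simp: cT_snoc)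
  have "(u, v) \<in> S m (a - (if x then 1 else 0)) (b - (if y then 1 else 0)) k'"
    unfolding S_def using lu cu zc' by auto
  moreover have "z = g x y (u, v)" unfolding g_def zUV U V by simp
  ultimately show "z \<in> g True True ` S m (a-1) (b-1) k' \<union> g True False ` S m (a-1) b k' \<union>
                           g False True ` S m a (b-1) k' \<union> g False False ` S m a b k'"
    by (cases x; cases y) auto
next
  fix z assume "z \<in> g True True ` S m (a-1) (b-1) k' \<union> g True False ` S m (a-1) b k' \<union>
                           g False True ` S m a (b-1) k' \<union> g False False ` S m a b k'"
  then obtain x y u v where z: "z = g x y (u, v)"
     and uv: "(u, v) \<in> S m (a - (if x then 1 else 0)) (b - (if y then 1 else 0)) k'"
    by auto
  have lu: "length u = m" "length v = m" and cu: "int (cT u) = a - (if x then 1 else 0)"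
    "int (cT v) = b - (if y then 1 else 0)" and zz: "zc u v = k'" using uv unfolding S_def by auto
  have c: "int (cT (u @ [x])) = a" "int (cT (v @ [y])) = b" using cu by (auto simp: cT_snoc)
  have "zc (u @ [x]) (v @ [y]) = k"
    using zc_snoc[of u v x y] lu c zz assms(1) unfolding k'_def by auto
  then show "z \<in> S (Suc m) a b k" unfolding z g_def S_def using lu c by simp
qed

lemma card_S: "card (S m a b k) = Yf m a b k"
proof (induction m arbitrary: a b k)
  case 0
  have z0: "zc [] [] = 0" unfolding zc_def by simp
  have "S 0 a b k = (if a = 0 \<and> b = 0 \<and> k = 0 then {([], [])} else {})"
    unfolding S_def using z0 by (auto simp: cT_def)
  then show ?case by simp
next
  case (Suc m)
  show ?case
  proof (cases "a = b \<and> k = 0")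
    case True
    then show ?thesis using S_Suc_empty by simp
  next
    case False
    define k' where "k' = (if a = b then k - 1 else k)"
    have e: "S (Suc m) a b k = g True True ` S m (a-1) (b-1) k' \<union> g True False ` S m (a-1) b k' \<union>
                           g False True ` S m a (b-1) k' \<union> g False False ` S m a b k'"
      using S_Suc[OF False] unfolding k'_def by simp
    have ci: "card (g x y ` S m c d k') = Yf m c d k'" for x y c d
      using Suc.IH card_image[OF inj_on_subset[OF g_inj subset_UNIV]] by simp
    have fi: "finite (g x y ` S m c d k')" for x y c d using finite_S by simp
    have dj: "g x y ` A \<inter> g x' y' ` A' = {}" if "(x, y) \<noteq> (x', y')" for x y x' y' A A'
      using that by (auto simp: g_def split: prod.splits)
    have "card (S (Suc m) a b k) = Yf m (a-1) (b-1) k' + Yf m (a-1) b k' + Yf m a (b-1) k' + Yf m a b k'"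
      unfolding e
      apply (subst card_Un_disjoint, simp add: fi, simp add: fi)
       apply (simp add: Int_Un_distrib2 dj)
      apply (subst card_Un_disjoint, simp add: fi, simp add: fi)
       apply (simp add: Int_Un_distrib2 dj)
      apply (subst card_Un_disjoint, simp add: fi, simp add: fi)
       apply (simp add: dj)
      apply (simp add: ci)
      done
    moreover have "Yf (Suc m) a b k = Yf m (a-1) (b-1) k' + Yf m (a-1) b k' + Yf m a (b-1) k' + Yf m a b k'"
      unfolding Yf.simps(2) Let_def if_not_P[OF False] k'_def ..
    ultimately show ?thesis by simp
  qed
qed

lemma Npairs_Yf:
  assumes "1 \<le> n" "r \<le> n"
  shows "Npairs k n r = Yf n (int r) (int r) (Suc k)"
proof -
  define h where "h = map_prod pth pth"
  have "{(P, Q). lattice_path n r P \<and> lattice_path n r Q \<and>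
       card ((set P \<inter> set Q) - {(0, 0), (r, n - r)}) = k} = h ` S n (int r) (int r) (Suc k)"
  proof (rule set_eqI, rule iffI)
    fix z assume "z \<in> {(P, Q). lattice_path n r P \<and> lattice_path n r Q \<and>
       card ((set P \<inter> set Q) - {(0, 0), (r, n - r)}) = k}"
    then obtain P Q where z: "z = (P, Q)" "lattice_path n r P" "lattice_path n r Q"
       "card ((set P \<inter> set Q) - {(0, 0), (r, n - r)}) = k" by auto
    obtain u where u: "length u = n" "cT u = r" "P = pth u" using z lp_iff by blast
    obtain v where v: "length v = n" "cT v = r" "Q = pth v" using z lp_iff by blast
    have ck: "card {i. 0 < i \<and> i < n \<and> cT (take i u) = cT (take i v)} = k"
      using inter_card[OF u(1) v(1) u(2) v(2)] z u v by simp
    have "{i \<in> {1..length u}. cT (take i u) = cT (take i v)} = insert n {i. 0 < i \<and> i < n \<and> cT (take i u) = cT (take i v)}"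
      using u v assms by auto
    then have "zc u v = Suc k" unfolding zc_def using ck by simp
    then have "(u, v) \<in> S n (int r) (int r) (Suc k)" unfolding S_def using u v by simp
    then show "z \<in> h ` S n (int r) (int r) (Suc k)" unfolding h_def z u v by force
  next
    fix z assume "z \<in> h ` S n (int r) (int r) (Suc k)"
    then obtain u v where z: "z = (pth u, pth v)" and uv: "(u, v) \<in> S n (int r) (int r) (Suc k)"
      unfolding h_def by auto
    have u: "length u = n" "cT u = r" and v: "length v = n" "cT v = r" and zz: "zc u v = Suc k"
      using uv unfolding S_def by auto
    have "{i \<in> {1..length u}. cT (take i u) = cT (take i v)} = insert n {i. 0 < i \<and> i < n \<and> cT (take i u) = cT (take i v)}"
      using u v assms by auto
    then have "card {i. 0 < i \<and> i < n \<and> cT (take i u) = cT (take i v)} = k"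
      using zz unfolding zc_def by simp
    then show "z \<in> {(P, Q). lattice_path n r P \<and> lattice_path n r Q \<and>
       card ((set P \<inter> set Q) - {(0, 0), (r, n - r)}) = k}"
      using inter_card[OF u(1) v(1) u(2) v(2)] lp_if u v z by simp
  qed
  moreover have "inj h" unfolding h_def
    by (rule injI) (auto simp: inj_eq[OF pth_inj] split: prod.splits)
  ultimately show ?thesis unfolding Npairs_def
    by (simp add: card_image inj_on_subset card_S)
qed



theorem mainTheorem5:
  fixes n r :: nat
  assumes "n \<ge> 3" and "r \<le> n"
  shows "real (Npairs 0 n r) = 2 / real (n - 1) * real ((n - 1) choose r) * real ((n - 1) choose (n - r))
         \<and> Npairs 1 n r = 2 * Npairs 0 n r"
proof -
  define q where "q = n - 3"
  have nq: "n = Suc (Suc (Suc q))" using assms(1) unfolding q_def by simp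
  define p where "p = Suc q"
  have np: "n = Suc (Suc p)" unfolding p_def nq ..
  have N0: "int (Npairs 0 n r) = F1 p (int r) (int r)"
    using Npairs_Yf[of n r 0] assms Yf_closed[of "int r" "int r" p] np by simp
  have "real (Npairs 0 n r) = real_of_int (F1 p (int r) (int r))"
    using N0 by (metis of_int_of_nat_eq)
  also have "... = 2 / real (p+1) * real (Suc p choose r) * real (Suc p choose (p + 2 - r))"
    by (rule narayana) (use assms np in simp)
  also have "... = 2 / real (n - 1) * real ((n - 1) choose r) * real ((n - 1) choose (n - r))"
    using np by simp
  finally have A: "real (Npairs 0 n r) = 2 / real (n - 1) * real ((n - 1) choose r) * real ((n - 1) choose (n - r))" .
  have "Npairs 1 n r = Yf n (int r) (int r) (Suc 1)"
    using Npairs_Yf[of n r 1] assms by simp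
  also have "... = Yf (Suc (Suc q)) (int r - 1) (int r - 1) 1 + Yf (Suc (Suc q)) (int r - 1) (int r) 1
                 + Yf (Suc (Suc q)) (int r) (int r - 1) 1 + Yf (Suc (Suc q)) (int r) (int r) 1"
    unfolding nq by (rule Yf_eqS)
  finally have N1: "Npairs 1 n r = Yf (Suc (Suc q)) (int r - 1) (int r - 1) 1 + Yf (Suc (Suc q)) (int r - 1) (int r) 1
                 + Yf (Suc (Suc q)) (int r) (int r - 1) 1 + Yf (Suc (Suc q)) (int r) (int r) 1" .
  have y1: "int (Yf (Suc (Suc q)) (int r - 1) (int r - 1) 1) = F1 q (int r - 1) (int r - 1)"
    using Yf_closed[of "int r - 1" "int r - 1" q] by simp
  have y2: "int (Yf (Suc (Suc q)) (int r) (int r - 1) 1) = F1 q (int r) (int r - 1)"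
    using Yf_closed[of "int r - 1" "int r" q] by simp
  have y3: "int (Yf (Suc (Suc q)) (int r - 1) (int r) 1) = F1 q (int r) (int r - 1)"
    using y2 Yf_sym by metis
  have y4: "int (Yf (Suc (Suc q)) (int r) (int r) 1) = F1 q (int r) (int r)"
    using Yf_closed[of "int r" "int r" q] by simp
  have "int (Npairs 1 n r) = F1 q (int r - 1) (int r - 1) + 2 * F1 q (int r) (int r - 1) + F1 q (int r) (int r)"
    unfolding N1 using y1 y2 y3 y4 by simp
  also have "... = 2 * F1 p (int r) (int r)" unfolding p_def by (rule N1_id)
  also have "... = int (2 * Npairs 0 n r)" using N0 by simp
  finally have B: "Npairs 1 n r = 2 * Npairs 0 n r" by (simp only: of_nat_eq_iff)
  show ?thesis using A B by simp
qed


end
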